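(* Let $U_1,U_2,\dots$ be i.i.d. almost surely positive random variables distributed as $U$ with tail function $Q(x)=\mathbb{P}(U>x)$, and assume $\mathbb{E}[U^2]<\infty$ and that there exist $\beta\in(0,1/2)$ and $x_0>0$ in the interior of the support of $U$ such that $Q^{1/2-\beta}$ is convex on $[x_0,\infty)$. Let $V_1\le\dots\le V_N$ be the order statistics of $(U_1,\dots,U_N)$, and define \[E_N(V)=\frac1N\sum_{i=1}^{N-1}\frac{V_iV_{N-1}}{V_{N-1}+V_i},\qquad C_N=\Big\{\tfrac14\mathbb{E}[U]\le E_N(V)\le 2\mathbb{E}[U]\Big\}.\] Then $\lim_{N\to\infty}\mathbb{P}(C_N)=1$. *)

theory Defs
  imports "HOL-Probability.Probability"
begin

definition measure_support :: "real measure \<Rightarrow> real set" where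
  "measure_support \<mu> = {x. \<forall>e>0. emeasure \<mu> (ball x e) > 0}"

text \<open>Order statistics V_1 \<le> ... \<le> V_N of (U_1,...,U_N), 1-indexed;
  the sample U_1,...,U_N is represented by U 0, ..., U (N-1).\<close>
definition order_stat :: "(nat \<Rightarrow> 'a \<Rightarrow> real) \<Rightarrow> nat \<Rightarrow> 'a \<Rightarrow> nat \<Rightarrow> real" where
  "order_stat U N \<omega> i = sort (map (\<lambda>j. U j \<omega>) [0..<N]) ! (i - 1)"

definition E_N :: "(nat \<Rightarrow> 'a \<Rightarrow> real) \<Rightarrow> nat \<Rightarrow> 'a \<Rightarrow> real" where
  "E_N U N \<omega> = (1 / real N) *
     (\<Sum>i=1..N-1. order_stat U N \<omega> i * order_stat U N \<omega> (N-1)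
                   / (order_stat U N \<omega> (N-1) + order_stat U N \<omega> i))"

end

theory Submission imports Defs begin

lemma sum_list_sort_eq: "sum_list (sort (xs::real list)) = sum_list xs"
  by (metis mset_sort sum_mset_sum_list)

lemma sort_nth_le_iff:
  fixes xs :: "real list"
  assumes k: "k < length xs"
  shows "(sort xs ! k \<le> a) \<longleftrightarrow> k < length (filter (\<lambda>y. y \<le> a) xs)"
proof -
  define ys where "ys = sort xs"
  have s: "sorted ys" and l: "length ys = length xs" by (auto simp: ys_def)
  have "length (filter (\<lambda>y. y \<le> a) xs) = length (filter (\<lambda>y. y \<le> a) ys)"
    unfolding ys_def by (metis mset_filter mset_sort size_mset)
  also have "\<dots> = card {i. i < length ys \<and> ys ! i \<le> a}"
    by (rule length_filter_conv_card)
  finally have eq: "length (filter (\<lambda>y. y \<le> a) xs) = card {i. i < length ys \<and> ys ! i \<le> a}" .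
  show ?thesis
  proof
    assume h: "sort xs ! k \<le> a"
    have "{0..k} \<subseteq> {i. i < length ys \<and> ys ! i \<le> a}"
    proof
      fix i assume "i \<in> {0..k}"
      then have "i \<le> k" by auto
      then have "ys ! i \<le> ys ! k" using s k l by (intro sorted_nth_mono) auto
      then show "i \<in> {i. i < length ys \<and> ys ! i \<le> a}" using h k l \<open>i \<le> k\<close> ys_def by auto
    qed
    then have "card {0..k} \<le> card {i. i < length ys \<and> ys ! i \<le> a}"
      by (intro card_mono) auto
    then show "k < length (filter (\<lambda>y. y \<le> a) xs)" using eq by simp
  next
    assume h: "k < length (filter (\<lambda>y. y \<le> a) xs)"
    show "sort xs ! k \<le> a"
    proof (rule ccontr)
      assume "\<not> sort xs ! k \<le> a"
      then have ka: "ys ! k > a" by (simp add: ys_def)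
      have "{i. i < length ys \<and> ys ! i \<le> a} \<subseteq> {0..<k}"
      proof
        fix i assume i: "i \<in> {i. i < length ys \<and> ys ! i \<le> a}"
        show "i \<in> {0..<k}"
        proof (rule ccontr)
          assume "i \<notin> {0..<k}"
          then have "k \<le> i" by auto
          then have "ys ! k \<le> ys ! i" using s i by (intro sorted_nth_mono) auto
          then show False using i ka by auto
        qed
      qed
      then have "card {i. i < length ys \<and> ys ! i \<le> a} \<le> k"
        by (metis card_atLeastLessThan card_mono diff_zero finite_atLeastLessThan)
      then show False using h eq by simp
    qed
  qed
qed

lemma len_filter_meas[measurable]:
  fixes U :: "nat \<Rightarrow> 'a \<Rightarrow> real"
  assumes [measurable]: "\<And>i. U i \<in> borel_measurable M"
  shows "(\<lambda>w. length (filter (\<lambda>j. U j w \<le> a) js)) \<in> measurable M (count_space UNIV)"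
proof (induction js)
  case Nil
  then show ?case by simp
next
  case (Cons j js)
  have e: "(\<lambda>w. length (filter (\<lambda>j. U j w \<le> a) (j # js))) =
    (\<lambda>w. if U j w \<le> a then Suc (length (filter (\<lambda>j. U j w \<le> a) js)) else length (filter (\<lambda>j. U j w \<le> a) js))"
    by auto
  show ?case unfolding e using Cons by measurable
qed

lemma order_stat_meas[measurable]:
  fixes U :: "nat \<Rightarrow> 'a \<Rightarrow> real"
  assumes [measurable]: "\<And>i. U i \<in> borel_measurable M"
  shows "(\<lambda>w. order_stat U N w i) \<in> borel_measurable M"
proof (cases "i - 1 < N")
  case True
  show ?thesis
  proof (subst borel_measurable_iff_le, intro allI)
    fix a
    have "{w \<in> space M. order_stat U N w i \<le> a} = {w \<in> space M. i - 1 < length (filter (\<lambda>j. U j w \<le> a) [0..<N])}"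
      using True by (auto simp: order_stat_def sort_nth_le_iff filter_map o_def)
    also have "\<dots> \<in> sets M" by measurable
    finally show "{w \<in> space M. order_stat U N w i \<le> a} \<in> sets M" .
  qed
next
  case False
  have "order_stat U N w i = [] ! (i - 1 - N)" for w
  proof -
    have "sort (map (\<lambda>j. U j w) [0..<N]) ! (i - 1) = (sort (map (\<lambda>j. U j w) [0..<N]) @ []) ! (i-1)" by simp
    also have "\<dots> = [] ! (i - 1 - N)" using False by (subst nth_append) auto
    finally show ?thesis by (simp add: order_stat_def)
  qed
  then show ?thesis by simp
qed

lemma E_N_meas[measurable]:
  fixes U :: "nat \<Rightarrow> 'a \<Rightarrow> real"
  assumes [measurable]: "\<And>i. U i \<in> borel_measurable M"
  shows "E_N U N \<in> borel_measurable M"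
  unfolding E_N_def by measurable


lemma term_bounds:
  fixes a b :: real assumes "0 < a" "a \<le> b"
  shows "a / 2 \<le> a * b / (b + a)" "a * b / (b + a) \<le> a"
  using assms by (auto simp: field_simps)

lemma det:
  fixes U :: "nat \<Rightarrow> 'a \<Rightarrow> real"
  assumes N: "2 \<le> N" and mu: "0 < \<mu>"
    and pos: "\<And>j. j < N \<Longrightarrow> U j w > 0"
    and S: "\<bar>(\<Sum>j<N. U j w) - N * \<mu>\<bar> < N * \<mu> / 4"
    and small: "\<And>j. j < N \<Longrightarrow> U j w < N * \<mu> / 4"
  shows "\<mu> / 4 \<le> E_N U N w \<and> E_N U N w \<le> 2 * \<mu>"
proof -
  define xs where "xs = map (\<lambda>j. U j w) [0..<N]"
  define ys where "ys = sort xs"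
  have len: "length ys = N" by (simp add: ys_def xs_def)
  have s: "sorted ys" by (simp add: ys_def)
  have setys: "set ys = (\<lambda>j. U j w) ` {0..<N}" by (simp add: ys_def xs_def)
  have ypos: "ys ! k > 0" if "k < N" for k
  proof -
    have "ys ! k \<in> set ys" using that len by simp
    then show ?thesis using setys pos by auto
  qed
  have os: "order_stat U N w i = ys ! (i - 1)" for i
    by (simp add: order_stat_def ys_def xs_def)
  have sumS: "(\<Sum>k<N. ys ! k) = (\<Sum>j<N. U j w)"
  proof -
    have "(\<Sum>k<N. ys ! k) = sum_list ys" using len by (simp add: sum_list_sum_nth atLeast0LessThan)
    also have "\<dots> = sum_list xs" by (simp add: ys_def sum_list_sort_eq)
    also have "\<dots> = (\<Sum>j<N. U j w)" by (simp add: xs_def sum_list_sum_nth atLeast0LessThan)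
    finally show ?thesis .
  qed
  define T where "T = (\<Sum>k<N-1. ys ! k)"
  define m where "m = ys ! (N - 1)"
  have NS: "N = Suc (N - 1)" using N by simp
  have TS: "T + m = (\<Sum>j<N. U j w)"
    unfolding T_def m_def sumS[symmetric] by (subst (2) NS, subst sum.lessThan_Suc) simp
  have "m \<in> set ys" using len N by (simp add: m_def)
  then obtain j where "j < N" "m = U j w" using setys by auto
  then have m1: "m < N * \<mu> / 4" "0 < m" using small pos by auto
  have reidx: "(\<Sum>i=1..N-1. f (i - 1)) = (\<Sum>k<N-1. f k)" for f :: "nat \<Rightarrow> real"
  proof -
    have "(\<Sum>i=1..N-1. f (i - 1)) = (\<Sum>i\<in>Suc ` {..<N-1}. f (i - 1))"
      by (simp add: image_Suc_lessThan)
    also have "\<dots> = (\<Sum>k<N-1. f k)" by (subst sum.reindex) auto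
    finally show ?thesis .
  qed
  define t where "t i = order_stat U N w i * order_stat U N w (N-1) / (order_stat U N w (N-1) + order_stat U N w i)" for i
  have tb: "ys ! (i-1) / 2 \<le> t i \<and> t i \<le> ys ! (i - 1)" if "i \<in> {1..N-1}" for i
  proof -
    have "ys ! (i-1) \<le> ys ! (N - 2)" using that s len N by (intro sorted_nth_mono) auto
    moreover have "0 < ys ! (i-1)" using that N by (intro ypos) auto
    moreover have "N - 1 - 1 = N - 2" by simp
    ultimately show ?thesis using term_bounds[of "ys ! (i-1)" "ys ! (N-2)"] unfolding t_def os by simp
  qed
  have EN: "E_N U N w = (1 / real N) * (\<Sum>i=1..N-1. t i)" by (simp add: E_N_def t_def)
  have lo: "(\<Sum>i=1..N-1. t i) \<ge> T / 2"
  proof -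
    have "(\<Sum>i=1..N-1. t i) \<ge> (\<Sum>i=1..N-1. ys ! (i-1) / 2)" using tb by (intro sum_mono) auto
    moreover have "(\<Sum>i=1..N-1. ys ! (i-1) / 2) = T / 2"
      unfolding T_def by (subst reidx[of "\<lambda>k. ys ! k / 2"]) (simp add: sum_divide_distrib)
    ultimately show ?thesis by simp
  qed
  have hi: "(\<Sum>i=1..N-1. t i) \<le> T"
  proof -
    have "(\<Sum>i=1..N-1. t i) \<le> (\<Sum>i=1..N-1. ys ! (i-1))" using tb by (intro sum_mono) auto
    moreover have "(\<Sum>i=1..N-1. ys ! (i-1)) = T"
      unfolding T_def by (subst reidx[of "\<lambda>k. ys ! k"]) simp
    ultimately show ?thesis by simp
  qed
  have Np: "real N > 0" using N by simp
  have T1: "T > N * \<mu> / 2" using TS m1 S unfolding abs_less_iff by linarith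
  have T2: "T < N * \<mu> * 5 / 4" using TS m1 S unfolding abs_less_iff by linarith
  have "\<mu> / 4 \<le> E_N U N w"
  proof -
    have "\<mu> / 4 = (1 / real N) * (N * \<mu> / 4)" using Np by simp
    also have "\<dots> \<le> (1 / real N) * (\<Sum>i=1..N-1. t i)"
      using lo T1 Np by (intro mult_left_mono) auto
    finally show ?thesis using EN by simp
  qed
  moreover have "E_N U N w \<le> 2 * \<mu>"
  proof -
    have "E_N U N w \<le> (1 / real N) * (N * \<mu> * 2)"
      unfolding EN proof (intro mult_left_mono)
      have "real N * \<mu> > 0" using Np mu by simp
      then show "sum t {1..N - 1} \<le> real N * \<mu> * 2" using hi T2 by linarith
    qed (use Np in auto)
    also have "\<dots> = 2 * \<mu>" using Np by simp
    finally show ?thesis .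
  qed
  ultimately show ?thesis by simp
qed


lemma sq_lt_abs: fixes x t :: real assumes "0 < t" "\<not> t^2 \<le> x^2" shows "\<bar>x\<bar> < t"
proof (rule ccontr)
  assume "\<not> \<bar>x\<bar> < t"
  then have "t^2 \<le> \<bar>x\<bar>^2" using assms by (intro power_mono) auto
  then show False using assms by simp
qed

theorem lemma4:
  fixes M :: "'a measure" and U :: "nat \<Rightarrow> 'a \<Rightarrow> real"
    and \<beta> x0 :: real
  assumes P: "prob_space M"
    and meas: "\<And>i. U i \<in> borel_measurable M"
    and indep: "prob_space.indep_vars M (\<lambda>_. borel) U UNIV"
    and ident: "\<And>i. distr M borel (U i) = distr M borel (U 0)"
    and pos: "\<And>i. AE \<omega> in M. U i \<omega> > 0"
    and sq: "integrable M (\<lambda>\<omega>. (U 0 \<omega>)\<^sup>2)"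
    and beta: "0 < \<beta>" "\<beta> < 1/2"
    and x0: "x0 > 0" "x0 \<in> interior (measure_support (distr M borel (U 0)))"
    and cvx: "convex_on {x0..}
               (\<lambda>x. (measure M {\<omega> \<in> space M. U 0 \<omega> > x}) powr (1/2 - \<beta>))"
  shows "(\<lambda>N. measure M {\<omega> \<in> space M.
              (1/4) * (\<integral>\<omega>'. U 0 \<omega>' \<partial>M) \<le> E_N U N \<omega> \<and>
              E_N U N \<omega> \<le> 2 * (\<integral>\<omega>'. U 0 \<omega>' \<partial>M)}) \<longlonglongrightarrow> 1"
proof -
  interpret prob_space M by (rule P)
  note [measurable] = meas
  have intg_eq: "integrable M (\<lambda>w. g (U j w)) \<longleftrightarrow> integrable M (\<lambda>w. g (U 0 w))"
    if [measurable]: "g \<in> borel_measurable borel" for g :: "real \<Rightarrow> real" and j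
  proof -
    have "integrable M (\<lambda>w. g (U j w)) \<longleftrightarrow> integrable (distr M borel (U j)) g"
      by (rule integrable_distr_eq[symmetric]) auto
    also have "\<dots> \<longleftrightarrow> integrable (distr M borel (U 0)) g" by (simp add: ident[of j])
    also have "\<dots> \<longleftrightarrow> integrable M (\<lambda>w. g (U 0 w))"
      by (rule integrable_distr_eq) auto
    finally show ?thesis .
  qed
  have int_eq: "(\<integral>w. g (U j w) \<partial>M) = (\<integral>w. g (U 0 w) \<partial>M)"
    if [measurable]: "g \<in> borel_measurable borel" for g :: "real \<Rightarrow> real" and j
  proof -
    have "(\<integral>w. g (U j w) \<partial>M) = integral\<^sup>L (distr M borel (U j)) g"
      by (rule integral_distr[symmetric]) auto
    also have "\<dots> = integral\<^sup>L (distr M borel (U 0)) g" by (simp add: ident[of j])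
    also have "\<dots> = (\<integral>w. g (U 0 w) \<partial>M)"
      by (rule integral_distr) auto
    finally show ?thesis .
  qed
  define \<mu> where "\<mu> = (\<integral>w. U 0 w \<partial>M)"
  define c where "c = (\<integral>w. (U 0 w)^2 \<partial>M)"
  define s2 where "s2 = (\<integral>w. (U 0 w - \<mu>)^2 \<partial>M)"
  have int0: "integrable M (U 0)"
    by (rule square_integrable_imp_integrable[OF _ sq]) simp
  have intU: "integrable M (U j)" for j
    using intg_eq[of "\<lambda>x. x" j] int0 by simp
  have intSq: "integrable M (\<lambda>w. (U j w)^2)" for j
    using intg_eq[of "\<lambda>x. x^2" j] sq by simp
  have intC0: "integrable M (\<lambda>w. (U 0 w - \<mu>)^2)"
    unfolding power2_diff using sq int0 by auto
  have intC: "integrable M (\<lambda>w. (U j w - \<mu>)^2)" for j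
    using intg_eq[of "\<lambda>x. (x - \<mu>)^2" j] intC0 by simp
  have EU: "(\<integral>w. U j w \<partial>M) = \<mu>" for j
    using int_eq[of "\<lambda>x. x" j] by (simp add: \<mu>_def)
  have ESq: "(\<integral>w. (U j w)^2 \<partial>M) = c" for j
    using int_eq[of "\<lambda>x. x^2" j] by (simp add: c_def)
  have EC: "(\<integral>w. (U j w - \<mu>)^2 \<partial>M) = s2" for j
    using int_eq[of "\<lambda>x. (x - \<mu>)^2" j] by (simp add: s2_def)
  have mu_pos: "\<mu> > 0"
  proof -
    have ge: "\<mu> \<ge> 0" unfolding \<mu>_def
      by (rule integral_nonneg_AE) (use pos[of 0] in \<open>auto elim: AE_mp\<close>)
    have "\<mu> \<noteq> 0"
    proof
      assume "\<mu> = 0"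
      have nn: "AE w in M. 0 \<le> U 0 w" using pos[of 0] by eventually_elim auto
      have "AE w in M. U 0 w = 0"
        using integral_nonneg_eq_0_iff_AE[OF int0 nn] \<open>\<mu> = 0\<close> unfolding \<mu>_def by simp
      with pos[of 0] have "AE w in M. False" by eventually_elim auto
      then show False by simp
    qed
    with ge show ?thesis by simp
  qed
  define X where "X j w = U j w - \<mu>" for j w
  have [measurable]: "X j \<in> borel_measurable M" for j unfolding X_def by measurable
  have indX: "indep_vars (\<lambda>_. borel) X UNIV"
    using indep_vars_compose2[OF indep, of "\<lambda>_ x. x - \<mu>" "\<lambda>_. borel"] unfolding X_def by simp
  have intX: "integrable M (X j)" for j unfolding X_def using intU by auto
  have EX: "(\<integral>w. X j w \<partial>M) = 0" for j unfolding X_def using intU EU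
    by (simp add: prob_space)
  have cross: "integrable M (\<lambda>w. X j w * X k w) \<and> (\<integral>w. X j w * X k w \<partial>M) = (if j = k then s2 else 0)" for j k
  proof (cases "j = k")
    case True
    then show ?thesis using intC[of k] EC[of k] unfolding X_def by (simp add: power2_eq_square)
  next
    case False
    have ind2: "indep_vars (\<lambda>_. borel) X {j, k}" by (rule indep_vars_subset[OF indX]) auto
    have pe: "(\<Prod>i\<in>{j,k}. X i w) = X j w * X k w" for w using False by simp
    have "integrable M (\<lambda>w. \<Prod>i\<in>{j,k}. X i w)"
      by (rule indep_vars_integrable[OF _ ind2]) (auto simp: intX)
    moreover have "(\<integral>w. (\<Prod>i\<in>{j,k}. X i w) \<partial>M) = (\<Prod>i\<in>{j,k}. \<integral>w. X i w \<partial>M)"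
      by (rule indep_vars_lebesgue_integral[OF _ ind2]) (auto simp: intX)
    ultimately show ?thesis using False EX unfolding pe by simp
  qed
  have varS: "integrable M (\<lambda>w. (\<Sum>j<N. X j w)^2) \<and> (\<integral>w. (\<Sum>j<N. X j w)^2 \<partial>M) = N * s2" for N
  proof -
    have e: "(\<lambda>w. (\<Sum>j<N. X j w)^2) = (\<lambda>w. \<Sum>j<N. \<Sum>k<N. X j w * X k w)"
      by (simp add: power2_eq_square sum_product)
    have ci: "\<And>j k. integrable M (\<lambda>w. X j w * X k w)" using cross by blast
    have i: "integrable M (\<lambda>w. \<Sum>j<N. \<Sum>k<N. X j w * X k w)"
      using ci by (intro Bochner_Integration.integrable_sum) auto
    have "(\<integral>w. (\<Sum>j<N. \<Sum>k<N. X j w * X k w) \<partial>M) = (\<Sum>j<N. \<Sum>k<N. \<integral>w. X j w * X k w \<partial>M)"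
      using ci by (simp add: Bochner_Integration.integrable_sum)
    also have "\<dots> = (\<Sum>j<N. \<Sum>k<N. if j = k then s2 else 0)" using cross by simp
    also have "\<dots> = N * s2" by simp
    finally show ?thesis using e i by simp
  qed
  define A where "A N = {\<omega> \<in> space M.
              (1/4) * (\<integral>\<omega>'. U 0 \<omega>' \<partial>M) \<le> E_N U N \<omega> \<and>
              E_N U N \<omega> \<le> 2 * (\<integral>\<omega>'. U 0 \<omega>' \<partial>M)}" for N
  define B where "B N = 16 * (s2 + c) / \<mu>^2 * inverse (real N)" for N
  have B0: "B \<longlonglongrightarrow> 0" unfolding B_def
    by (rule tendsto_mult_right_zero) (rule lim_inverse_n)
  have bound: "1 - B N \<le> measure M (A N)" if N: "N \<ge> 2" for N
  proof -
    define t where "t = N * \<mu> / 4"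
    have tpos: "t > 0" using N mu_pos by (simp add: t_def)
    have Aev: "A N \<in> sets M" unfolding A_def by measurable
    define Z where "Z = {w\<in>space M. \<not> (\<forall>j\<in>{..<N}. 0 < U j w)}"
    define B2 where "B2 = {w\<in>space M. t^2 \<le> (\<Sum>j<N. X j w)^2}"
    define B3 where "B3 j = {w\<in>space M. t^2 \<le> (U j w)^2}" for j
    have Zs: "Z \<in> sets M" unfolding Z_def by measurable
    have "AE w in M. \<forall>j\<in>{..<N}. 0 < U j w" by (intro AE_finite_allI) (auto simp: pos)
    then have Znull: "Z \<in> null_sets M" using AE_iff_null[of M "\<lambda>w. \<forall>j\<in>{..<N}. 0 < U j w"] Zs
      unfolding Z_def by simp
    have B2s: "B2 \<in> sets M" unfolding B2_def by measurable
    have B3s: "B3 j \<in> sets M" for j unfolding B3_def by measurable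
    have incl: "space M - A N \<subseteq> Z \<union> B2 \<union> (\<Union>j\<in>{..<N}. B3 j)"
    proof
      fix w assume w: "w \<in> space M - A N"
      show "w \<in> Z \<union> B2 \<union> (\<Union>j\<in>{..<N}. B3 j)"
      proof (rule ccontr)
        assume nw: "w \<notin> Z \<union> B2 \<union> (\<Union>j\<in>{..<N}. B3 j)"
        have p: "\<And>j. j < N \<Longrightarrow> U j w > 0" using nw w unfolding Z_def by auto
        have "\<not> t^2 \<le> (\<Sum>j<N. X j w)^2" using nw w unfolding B2_def by auto
        then have "\<bar>\<Sum>j<N. X j w\<bar> < t" using tpos by (rule sq_lt_abs[rotated])
        moreover have "(\<Sum>j<N. X j w) = (\<Sum>j<N. U j w) - N * \<mu>"
          by (simp add: X_def sum_subtractf)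
        ultimately have S: "\<bar>(\<Sum>j<N. U j w) - N * \<mu>\<bar> < N * \<mu> / 4" by (simp add: t_def)
        have sm: "U j w < N * \<mu> / 4" if "j < N" for j
        proof -
          have "\<not> t^2 \<le> (U j w)^2" using nw w that unfolding B3_def by auto
          then have "\<bar>U j w\<bar> < t" using tpos by (rule sq_lt_abs[rotated])
          then show ?thesis by (simp add: t_def)
        qed
        have "\<mu> / 4 \<le> E_N U N w \<and> E_N U N w \<le> 2 * \<mu>"
          by (rule det[of N \<mu> U w, OF N mu_pos p S sm])
        then show False using w unfolding A_def \<mu>_def by auto
      qed
    qed
    have "measure M (space M - A N) \<le> measure M (Z \<union> B2 \<union> (\<Union>j\<in>{..<N}. B3 j))"
      using incl Zs B2s B3s by (intro finite_measure_mono) auto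
    also have "\<dots> \<le> measure M (Z \<union> B2) + measure M (\<Union>j\<in>{..<N}. B3 j)"
      using Zs B2s B3s by (intro measure_Un_le) auto
    also have "\<dots> \<le> measure M Z + measure M B2 + (\<Sum>j<N. measure M (B3 j))"
      using Zs B2s B3s
      by (intro add_mono measure_Un_le finite_measure_subadditive_finite) auto
    also have "measure M Z = 0" using Znull by (rule measure_eq_0_null_sets)
    also have "measure M B2 \<le> (N * s2) / t^2"
    proof -
      have "measure M B2 \<le> (\<integral>w. (\<Sum>j<N. X j w)^2 \<partial>M) / t^2" unfolding B2_def
        using varS[of N] tpos by (intro integral_Markov_inequality_measure[where A="space M"]) auto
      then show ?thesis using varS[of N] by simp
    qed
    also have "(\<Sum>j<N. measure M (B3 j)) \<le> (\<Sum>j<N. c / t^2)"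
    proof (intro sum_mono)
      fix j
      have "measure M (B3 j) \<le> (\<integral>w. (U j w)^2 \<partial>M) / t^2" unfolding B3_def
        using intSq[of j] tpos by (intro integral_Markov_inequality_measure[where A="space M"]) auto
      then show "measure M (B3 j) \<le> c / t^2" using ESq by simp
    qed
    also have "0 + N * s2 / t^2 + (\<Sum>j<N. c / t^2) = B N"
      using N mu_pos unfolding B_def t_def by (simp add: field_simps power2_eq_square)
    finally have "measure M (space M - A N) \<le> B N" by simp
    then show ?thesis using prob_compl[OF Aev] by simp
  qed
  have "(\<lambda>N. measure M (A N)) \<longlonglongrightarrow> 1"
  proof (rule tendsto_sandwich[where f="\<lambda>N. 1 - B N" and h="\<lambda>_. 1"])
    show "\<forall>\<^sub>F N in sequentially. 1 - B N \<le> measure M (A N)"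
      using bound by (intro eventually_sequentiallyI[of 2]) auto
    show "\<forall>\<^sub>F N in sequentially. measure M (A N) \<le> 1" by (simp add: measure_le_1)
    show "(\<lambda>N. 1 - B N) \<longlonglongrightarrow> 1" using tendsto_diff[OF tendsto_const B0, of 1] by simp
  qed simp
  then show ?thesis unfolding A_def .
qed

end
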